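(* Let $n$ be sufficiently large and let $K_{2n+1}$ be ND-coloured. Let $x,y\in V(K_{2n+1})$ be distinct vertices, let $C\subseteq C(K_{2n+1})$ be a set of $100$ colours, and let $X\subseteq V(K_{2n+1})$ and $C'\subseteq C(K_{2n+1})$ satisfy $|X|\leq n/10^3$ and $|C'|\leq n/10^3$. Then there is a set $\bar{C}\subseteq C(K_{2n+1})\setminus (C\cup C')$ of $694$ colours and a set $\bar{X}\subseteq V(K_{2n+1})\setminus X$ of at most $1500$ vertices such that, for each $c\in C$, there is a $(\bar{C}\cup \{c\})$-rainbow $x,y$-path of length $695$ all of whose internal vertices lie in $\bar{X}$.
   Context: ND-colouring of $K_{2n+1}$: vertex set $\{0,\dots,2n\}$, edge $ij$ has colour $k\in\{1,\dots,n\}$ where $i-j\equiv\pm k\pmod{2n+1}$; $C(K_{2n+1})=\{1,\dots,n\}$. A graph is $D$-rainbow if its edges have distinct colours all in $D$. Length of a path is its number of edges. *)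

theory Defs
  imports Complex_Main
begin

text \<open>ND-colouring of K_{2n+1} on vertex set {0..2n}: edge ij gets colour k in {1..n}
  with i - j = +-k mod (2n+1).\<close>

definition nd_colour :: "nat \<Rightarrow> nat \<Rightarrow> nat \<Rightarrow> nat" where
  "nd_colour n i j = (let d = (int i - int j) mod (2 * int n + 1)
                      in nat (if d \<le> int n then d else 2 * int n + 1 - d))"

definition nd_vertices :: "nat \<Rightarrow> nat set" where
  "nd_vertices n = {0..2*n}"

definition nd_colours :: "nat \<Rightarrow> nat set" where
  "nd_colours n = {1..n}"

definition is_path :: "nat \<Rightarrow> nat list \<Rightarrow> bool" where
  "is_path n ps \<longleftrightarrow> ps \<noteq> [] \<and> distinct ps \<and> set ps \<subseteq> nd_vertices n"

definition path_len :: "nat list \<Rightarrow> nat" where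
  "path_len ps = length ps - 1"

definition path_colours :: "nat \<Rightarrow> nat list \<Rightarrow> nat list" where
  "path_colours n ps = map (\<lambda>k. nd_colour n (ps ! k) (ps ! Suc k)) [0..<length ps - 1]"

definition rainbow :: "nat \<Rightarrow> nat set \<Rightarrow> nat list \<Rightarrow> bool" where
  "rainbow n D ps \<longleftrightarrow> distinct (path_colours n ps) \<and> set (path_colours n ps) \<subseteq> D"

definition internal_vertices :: "nat list \<Rightarrow> nat set" where
  "internal_vertices ps = set (butlast (tl ps))"

end

theory Submission
  imports Defs
begin


definition cl :: "nat \<Rightarrow> int \<Rightarrow> nat" where
  "cl n z = (let d = z mod (2 * int n + 1) in nat (if d \<le> int n then d else 2 * int n + 1 - d))"

definition vadd :: "nat \<Rightarrow> nat \<Rightarrow> int \<Rightarrow> nat" where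
  "vadd n u z = nat ((int u + z) mod (2 * int n + 1))"

lemma nd_colour_cl: "nd_colour n i j = cl n (int i - int j)"
  by (simp add: nd_colour_def cl_def)

lemma cl_mod_eq: "a mod (2 * int n + 1) = b mod (2 * int n + 1) \<Longrightarrow> cl n a = cl n b"
  by (simp add: cl_def)

lemma cl_alt: "cl n a = nat (if a mod (2 * int n + 1) \<le> int n then a mod (2 * int n + 1) else 2 * int n + 1 - a mod (2 * int n + 1))"
  by (simp add: cl_def Let_def)

lemma mod_bounds: "0 \<le> a mod (2 * int n + 1)" "a mod (2 * int n + 1) < 2 * int n + 1"
  using pos_mod_sign[of "2 * int n + 1" a] pos_mod_bound[of "2 * int n + 1" a] by linarith+

lemma cl_int: "int (cl n a) = (if a mod (2 * int n + 1) \<le> int n then a mod (2 * int n + 1) else 2 * int n + 1 - a mod (2 * int n + 1))"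
  using mod_bounds[of a n] unfolding cl_alt by auto

lemma cl_neg: "cl n (- a) = cl n a"
proof -
  define N where "N = 2 * int n + 1"
  define m where "m = a mod N"
  have m: "0 \<le> m" "m < N" using mod_bounds[of a n] by (auto simp: m_def N_def)
  have e: "(-a) mod N = (if m = 0 then 0 else N - m)" by (simp add: m_def zmod_zminus1_eq_if)
  have c1: "cl n a = nat (if m \<le> int n then m else N - m)" by (simp add: cl_alt m_def N_def)
  have c2: "cl n (-a) = nat (if (-a) mod N \<le> int n then (-a) mod N else N - (-a) mod N)" by (simp add: cl_alt N_def)
  show ?thesis
  proof (cases "m = 0")
    case True then show ?thesis using c1 c2 e by simp
  next
    case False
    then have e': "(-a) mod N = N - m" using e by simp
    show ?thesis unfolding c1 c2 e' using m False unfolding N_def by auto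
  qed
qed

lemma cl_cases: "cl n a = k \<Longrightarrow> a mod (2 * int n + 1) = int k \<or> a mod (2 * int n + 1) = 2 * int n + 1 - int k"
  using cl_int[of n a] by (auto split: if_split_asm)

lemma cl_zero: "cl n a = 0 \<Longrightarrow> a mod (2 * int n + 1) = 0"
  using cl_int[of n a] mod_bounds[of a n] by (auto split: if_split_asm)

lemma cl_range: "a mod (2 * int n + 1) \<noteq> 0 \<Longrightarrow> cl n a \<in> nd_colours n"
proof -
  assume h: "a mod (2 * int n + 1) \<noteq> 0"
  have "1 \<le> int (cl n a) \<and> int (cl n a) \<le> int n"
    using h cl_int[of n a] mod_bounds[of a n] by (auto split: if_split_asm)
  then show ?thesis unfolding nd_colours_def by auto
qed

lemma cl_le: "int (cl n a) \<le> int n"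
  using cl_int[of n a] mod_bounds[of a n] by (auto split: if_split_asm)

lemma cl_id: "1 \<le> k \<Longrightarrow> k \<le> n \<Longrightarrow> cl n (int k) = k"
  unfolding cl_def Let_def by simp

lemma cl_eqD: "cl n a = cl n b \<Longrightarrow> a mod (2 * int n + 1) = b mod (2 * int n + 1) \<or> a mod (2 * int n + 1) = (- b) mod (2 * int n + 1)"
proof -
  assume h: "cl n a = cl n b"
  define N where "N = 2 * int n + 1"
  define k where "k = int (cl n b)"
  have A: "a mod N = k \<or> a mod N = N - k" using cl_cases[OF h] by (simp add: N_def k_def)
  have B: "b mod N = k \<or> b mod N = N - k" using cl_cases[of n b "cl n b"] by (simp add: N_def k_def)
  have C: "(-b) mod N = (if b mod N = 0 then 0 else N - b mod N)"
    by (simp add: zmod_zminus1_eq_if)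
  have k: "0 \<le> k" "k \<le> int n" using cl_le[of n b] by (simp_all add: k_def)
  have ma: "0 \<le> a mod N" "a mod N < N" using mod_bounds[of a n] by (simp_all add: N_def)
  have mb: "0 \<le> b mod N" "b mod N < N" using mod_bounds[of b n] by (simp_all add: N_def)
  have "a mod N = b mod N \<or> a mod N = (- b) mod N"
    using A B C k ma mb unfolding N_def by auto
  then show ?thesis by (simp add: N_def)
qed

lemma int_vadd: "int (vadd n u z) = (int u + z) mod (2 * int n + 1)"
  unfolding vadd_def by simp

lemma vadd_in: "vadd n u z \<in> nd_vertices n"
proof -
  have "(int u + z) mod (2 * int n + 1) < 2 * int n + 1" by (rule mod_bounds)
  then have "nat ((int u + z) mod (2 * int n + 1)) \<le> 2 * n" by linarith
  then show ?thesis unfolding vadd_def nd_vertices_def by simp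
qed

lemma nd_colour_vadd: "nd_colour n (vadd n u a) (vadd n u b) = cl n (a - b)"
  unfolding nd_colour_cl int_vadd
  by (rule cl_mod_eq) (simp add: mod_diff_eq)

lemma vadd_0: "u \<in> nd_vertices n \<Longrightarrow> vadd n u 0 = u"
  unfolding vadd_def nd_vertices_def by simp

lemma vadd_eqD: "vadd n u a = vadd n u b \<Longrightarrow> a mod (2 * int n + 1) = b mod (2 * int n + 1)"
proof -
  assume "vadd n u a = vadd n u b"
  then have "(int u + a) mod (2 * int n + 1) = (int u + b) mod (2 * int n + 1)"
    unfolding vadd_def by (simp add: eq_nat_nat_iff)
  then have "(int u + a - int u) mod (2 * int n + 1) = (int u + b - int u) mod (2 * int n + 1)"
    by (metis mod_diff_left_eq)
  then show ?thesis by simp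
qed

lemma nat_modI: "b \<in> nd_vertices n \<Longrightarrow> int b mod (2 * int n + 1) = z mod (2 * int n + 1) \<Longrightarrow> b = nat (z mod (2 * int n + 1))"
  unfolding nd_vertices_def by simp

lemma vadd_inv: "h \<in> nd_vertices n \<Longrightarrow> vadd n h e = v \<Longrightarrow> h = vadd n v (- e)"
proof -
  assume h: "h \<in> nd_vertices n" and v: "vadd n h e = v"
  have "((int h + e) mod (2 * int n + 1) - e) mod (2 * int n + 1) = int h mod (2 * int n + 1)"
    by (metis mod_diff_left_eq add_diff_cancel_right')
  moreover have "int h mod (2 * int n + 1) = int h" using h unfolding nd_vertices_def by simp
  moreover have "int v = (int h + e) mod (2 * int n + 1)" using v int_vadd by metis
  ultimately show ?thesis unfolding vadd_def by simp
qed

lemma nd_colour_sym: "nd_colour n i j = nd_colour n j i"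
  unfolding nd_colour_cl by (metis cl_neg minus_diff_eq)

lemma col_inv: "v \<in> nd_vertices n \<Longrightarrow> nd_colour n w v = d \<Longrightarrow> v = vadd n w (int d) \<or> v = vadd n w (- int d)"
proof -
  assume v: "v \<in> nd_vertices n" and h: "nd_colour n w v = d"
  define N where "N = 2 * int n + 1"
  have "cl n (int v - int w) = d" using h by (metis nd_colour_cl nd_colour_sym)
  from cl_cases[OF this] have cs: "(int v - int w) mod N = int d \<or> (int v - int w) mod N = N - int d"
    by (simp add: N_def)
  have base: "int v mod N = ((int v - int w) mod N + int w) mod N"
    by (metis diff_add_cancel mod_add_left_eq)
  from cs show ?thesis
  proof
    assume a: "(int v - int w) mod N = int d"
    have "int v mod N = (int w + int d) mod N" using base a by (simp add: add.commute)
    then show ?thesis using nat_modI[OF v] unfolding vadd_def N_def by auto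
  next
    assume a: "(int v - int w) mod N = N - int d"
    have "int v mod N = (N + (int w + (- int d))) mod N" using base a by (simp add: algebra_simps)
    also have "... = (int w + (- int d)) mod N" by simp
    finally show ?thesis using nat_modI[OF v] unfolding vadd_def N_def by auto
  qed
qed

lemma nd_colour_in: "i \<in> nd_vertices n \<Longrightarrow> j \<in> nd_vertices n \<Longrightarrow> i \<noteq> j \<Longrightarrow> nd_colour n i j \<in> nd_colours n"
proof -
  assume i: "i \<in> nd_vertices n" and j: "j \<in> nd_vertices n" and ij: "i \<noteq> j"
  have "(int i - int j) mod (2 * int n + 1) \<noteq> 0"
  proof
    assume "(int i - int j) mod (2 * int n + 1) = 0"
    then have d: "(2 * int n + 1) dvd (int i - int j)" by (simp add: mod_eq_0_iff_dvd)
    have "int i - int j \<noteq> 0" using ij by simp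
    from dvd_imp_le_int[OF this d] have "\<bar>2 * int n + 1\<bar> \<le> \<bar>int i - int j\<bar>" .
    then show False using i j unfolding nd_vertices_def by auto
  qed
  then show ?thesis unfolding nd_colour_cl by (rule cl_range)
qed



lemma path_colours_single[simp]: "path_colours n [a] = []"
  by (simp add: path_colours_def)

lemma path_colours_Nil[simp]: "path_colours n [] = []"
  by (simp add: path_colours_def)

lemma path_colours_Cons2[simp]: "path_colours n (a # b # xs) = nd_colour n a b # path_colours n (b # xs)"
proof -
  have "[0..<length (a # b # xs) - 1] = 0 # map Suc [0..<length (b # xs) - 1]"
    by (simp add: upt_conv_Cons map_Suc_upt del: upt_Suc)
  then show ?thesis unfolding path_colours_def by (simp add: o_def)
qed

lemma path_colours_append: "ps \<noteq> [] \<Longrightarrow> path_colours n (ps @ qs) = path_colours n ps @ path_colours n (last ps # qs)"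
proof (induction ps rule: induct_list012)
  case 1 then show ?case by simp
next
  case (2 x) then show ?case by simp
next
  case (3 x y zs) then show ?case by simp
qed

lemma length_path_colours: "length (path_colours n ps) = length ps - 1"
  by (simp add: path_colours_def)

lemma set_hd_tl: "ps \<noteq> [] \<Longrightarrow> set ps = insert (hd ps) (set (tl ps))"
  by (cases ps) auto



abbreviation NN :: "nat \<Rightarrow> int" where "NN n \<equiv> 2 * int n + 1"

definition rr :: "nat \<Rightarrow> int \<Rightarrow> nat" where "rr n z = nat (z mod NN n)"

lemma dvd_sub_mod: "NN n dvd (x - x mod NN n)"
  by (simp add: mod_eq_dvd_iff)

lemma mod_solve: "b \<in> nd_vertices n \<Longrightarrow> NN n dvd (int b - t) \<Longrightarrow> b = rr n t"
  unfolding rr_def by (rule nat_modI) (simp_all add: mod_eq_dvd_iff)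

lemma cl_solve: assumes b: "b \<in> nd_vertices n" and h: "cl n (int b + s) = d"
  shows "b = rr n (int d - s) \<or> b = rr n (- int d - s)"
proof -
  have k: "NN n dvd ((int b + s) - (int b + s) mod NN n)" by (rule dvd_sub_mod)
  from cl_cases[OF h] show ?thesis
  proof
    assume a: "(int b + s) mod NN n = int d"
    have "NN n dvd (int b + s - int d)" using k a by simp
    then have "NN n dvd (int b - (int d - s))" by (simp add: algebra_simps)
    then show ?thesis using mod_solve[OF b] by blast
  next
    assume a: "(int b + s) mod NN n = NN n - int d"
    have "NN n dvd (int b + s - (NN n - int d) + NN n)" using k a by (simp only: dvd_add_left_iff dvd_refl)
    then have "NN n dvd (int b - (- int d - s))" by (simp add: algebra_simps)
    then show ?thesis using mod_solve[OF b] by blast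
  qed
qed

lemma cl_solve0: assumes b: "b \<in> nd_vertices n" and h: "cl n (int b) = d"
  shows "b = rr n (int d) \<or> b = rr n (- int d)"
  using cl_solve[OF b, of 0 d] h by simp

lemma vadd_solve: assumes b: "b \<in> nd_vertices n" and h: "vadd n u (s + int b) = v"
  shows "b = rr n (int v - int u - s)"
proof -
  have "int v = (int u + (s + int b)) mod NN n" using h int_vadd by metis
  then have "int b - (int v - int u - s) = (int u + (s + int b)) - (int u + (s + int b)) mod NN n" by simp
  then have "NN n dvd (int b - (int v - int u - s))" using dvd_sub_mod by metis
  then show ?thesis using mod_solve[OF b] by blast
qed

lemma vadd_solve2: assumes b: "b \<in> nd_vertices n" and h: "vadd n u (s - int b) = v"
  shows "b = rr n (int u + s - int v)"
proof -
  have "int v = (int u + (s - int b)) mod NN n" using h int_vadd by metis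
  then have "int b - (int u + s - int v) = - ((int u + (s - int b)) - (int u + (s - int b)) mod NN n)" by simp
  then have "NN n dvd (int b - (int u + s - int v))" using dvd_sub_mod by (metis dvd_minus_iff)
  then show ?thesis using mod_solve[OF b] by blast
qed

lemma vadd_neq: "\<not> NN n dvd (a - a') \<Longrightarrow> vadd n u a \<noteq> vadd n u a'"
  using vadd_eqD[of n u a a'] by (auto simp: mod_eq_dvd_iff)

lemma cl_range': "\<not> NN n dvd a \<Longrightarrow> cl n a \<in> nd_colours n"
  by (rule cl_range) (simp add: dvd_eq_mod_eq_0)

lemma not_dvd_colour: "c \<in> nd_colours n \<Longrightarrow> \<not> NN n dvd int c"
proof
  assume c: "c \<in> nd_colours n" and d: "NN n dvd int c"
  have "int c \<noteq> 0" using c by (simp add: nd_colours_def)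
  from dvd_imp_le_int[OF this d] c show False by (simp add: nd_colours_def)
qed

lemma avoid: assumes "finite F" "card F < 2 * n + 1" shows "\<exists>v\<in>nd_vertices n. v \<notin> F"
proof (rule ccontr)
  assume "\<not> ?thesis"
  then have "nd_vertices n \<subseteq> F" by auto
  then have "card (nd_vertices n) \<le> card F" using assms(1) by (rule card_mono[rotated])
  then show False using assms(2) by (simp add: nd_vertices_def)
qed

lemma card_le_list: "card (set xs) \<le> length xs" by (rule card_length)

lemma card_insert_le1: "finite A \<Longrightarrow> card (insert a A) \<le> card A + 1"
  by (simp add: card_insert_if)



lemma ext_path:
  assumes p: "is_path n ps" and l: "last ps = w" and s: "set ps \<subseteq> U"
    and q: "distinct qs" "set qs \<subseteq> nd_vertices n" "set qs \<inter> U = {}"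
  shows "is_path n (ps @ qs)" "hd (ps @ qs) = hd ps" "set (tl (ps @ qs)) = set (tl ps) \<union> set qs"
        "path_colours n (ps @ qs) = path_colours n ps @ path_colours n (w # qs)"
        "last ps = w"
proof -
  have ne: "ps \<noteq> []" using p by (simp add: is_path_def)
  show "is_path n (ps @ qs)" using p q s unfolding is_path_def by auto
  show "hd (ps @ qs) = hd ps" using ne by simp
  show "set (tl (ps @ qs)) = set (tl ps) \<union> set qs" using ne by (cases ps) auto
  show "path_colours n (ps @ qs) = path_colours n ps @ path_colours n (w # qs)"
    using path_colours_append[OF ne] l by simp
  show "last ps = w" by (rule l)
qed

lemma card_Un3: "card (A \<union> B \<union> C) \<le> card A + card B + card C"
proof -
  have "card (A \<union> B \<union> C) \<le> card (A \<union> B) + card C" by (rule card_Un_le)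
  moreover have "card (A \<union> B) \<le> card A + card B" by (rule card_Un_le)
  ultimately show ?thesis by linarith
qed

lemma card_Un_le': "card A \<le> a \<Longrightarrow> card B \<le> b \<Longrightarrow> card (A \<union> B) \<le> a + b"
  using card_Un_le[of A B] by linarith

lemma card_img_le': "finite D \<Longrightarrow> card D \<le> a \<Longrightarrow> card (f ` D) \<le> a"
  using card_image_le[of D f] by linarith

locale ndsetup =
  fixes n x y :: nat and C X C' :: "nat set"
  assumes xV: "x \<in> nd_vertices n" and yV: "y \<in> nd_vertices n" and xy: "x \<noteq> y"
    and CC: "C \<subseteq> nd_colours n" and cardC: "card C = 100" and XX: "X \<subseteq> nd_vertices n"
    and CC': "C' \<subseteq> nd_colours n"
    and cX: "1000 * card X \<le> n" and cC': "1000 * card C' \<le> n" and nbig: "10000 \<le> n"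

context ndsetup
begin

definition ginv where
  "ginv S Cb V w P \<longleftrightarrow> V \<subseteq> nd_vertices n - X - {x, y} \<and> Cb \<subseteq> nd_colours n - (C \<union> C') \<and>
     w \<in> insert x V \<and>
     (\<forall>c\<in>C. is_path n (P c) \<and> hd (P c) = x \<and> last (P c) = w \<and> set (tl (P c)) \<subseteq> V \<and>
        distinct (path_colours n (P c)) \<and> set (path_colours n (P c)) = Cb \<union> (if c \<in> S then {c} else {}))"

lemma finV: "finite (nd_vertices n)" by (simp add: nd_vertices_def)
lemma finC: "finite (nd_colours n)" by (simp add: nd_colours_def)
lemma finX: "finite X" using XX finV finite_subset by blast
lemma finCC: "finite C" using CC finC finite_subset by blast
lemma finC': "finite C'" using CC' finC finite_subset by blast

lemma ginv_set: "ginv S Cb V w P \<Longrightarrow> c \<in> C \<Longrightarrow> set (P c) \<subseteq> insert x V"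
  unfolding ginv_def is_path_def by (metis set_hd_tl insert_mono)

lemma ginv_init: "ginv {} {} {} x (\<lambda>c. [x])"
  unfolding ginv_def is_path_def using xV by auto

lemma free_step:
  assumes g: "ginv S Cb V w P" and cV: "card V \<le> 1000" and cCb: "card Cb \<le> 700"
  shows "\<exists>v. ginv S (insert (nd_colour n w v) Cb) (insert v V) v (\<lambda>c. P c @ [v]) \<and>
            nd_colour n w v \<notin> Cb \<and> v \<notin> V"
proof -
  define W where "W = V \<union> X \<union> {x, y}"
  define D where "D = Cb \<union> C \<union> C'"
  have VV: "V \<subseteq> nd_vertices n" and CbC: "Cb \<subseteq> nd_colours n" using g unfolding ginv_def by auto
  have finVV: "finite V" using VV finV finite_subset by blast
  have finCb: "finite Cb" using CbC finC finite_subset by blast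
  have finW: "finite W" unfolding W_def using finVV finX by simp
  have finD: "finite D" unfolding D_def using finCb finCC finC' by simp
  have cW: "card W \<le> card V + card X + 2"
  proof -
    have "card W \<le> card V + card X + card {x, y}" unfolding W_def by (rule card_Un3)
    moreover have "card {x, y} \<le> 2" by (simp add: card_insert_if)
    ultimately show ?thesis by linarith
  qed
  have cD: "card D \<le> card Cb + card C + card C'" unfolding D_def by (rule card_Un3)
  define F where "F = W \<union> (\<lambda>d. vadd n w (int d)) ` D \<union> (\<lambda>d. vadd n w (- int d)) ` D"
  have finF: "finite F" unfolding F_def using finW finD by simp
  have "card F \<le> card W + card ((\<lambda>d. vadd n w (int d)) ` D) + card ((\<lambda>d. vadd n w (- int d)) ` D)"
    unfolding F_def by (rule card_Un3)
  moreover have "card ((\<lambda>d. vadd n w (int d)) ` D) \<le> card D" "card ((\<lambda>d. vadd n w (- int d)) ` D) \<le> card D"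
    by (rule card_image_le[OF finD])+
  ultimately have "card F \<le> card W + card D + card D" by linarith
  then have "card F < 2 * n + 1" using cW cD cV cCb cardC cX cC' nbig by linarith
  from avoid[OF finF this] obtain v where vV: "v \<in> nd_vertices n" and vF: "v \<notin> F" by blast
  have vW: "v \<notin> W" using vF unfolding F_def by simp
  have wV: "w \<in> nd_vertices n" using g xV unfolding ginv_def by auto
  have vw: "v \<noteq> w" using g vW unfolding ginv_def W_def by auto
  define k where "k = nd_colour n w v"
  have kD: "k \<notin> D"
  proof
    assume "k \<in> D"
    from col_inv[OF vV k_def[symmetric]] this vF show False unfolding F_def by auto
  qed
  have kC: "k \<in> nd_colours n" unfolding k_def using nd_colour_in[OF wV vV] vw by simp
  have setP: "\<And>c. c \<in> C \<Longrightarrow> set (P c) \<subseteq> insert x V" using ginv_set[OF g] .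
  show ?thesis
  proof (rule exI[of _ v], unfold k_def[symmetric], intro conjI)
    show "k \<notin> Cb" "v \<notin> V" using kD vW unfolding D_def W_def by auto
    show "ginv S (insert k Cb) (insert v V) v (\<lambda>c. P c @ [v])"
      unfolding ginv_def
    proof (intro conjI ballI)
      show "insert v V \<subseteq> nd_vertices n - X - {x, y}" using g vV vW unfolding ginv_def W_def by auto
      show "insert k Cb \<subseteq> nd_colours n - (C \<union> C')" using g kC kD unfolding ginv_def D_def by auto
      show "v \<in> insert x (insert v V)" by simp
      fix c assume c: "c \<in> C"
      have pc: "is_path n (P c)" "hd (P c) = x" "last (P c) = w" "set (tl (P c)) \<subseteq> V"
        "distinct (path_colours n (P c))" "set (path_colours n (P c)) = Cb \<union> (if c \<in> S then {c} else {})"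
        using g c unfolding ginv_def by auto
      have q: "distinct [v]" "set [v] \<subseteq> nd_vertices n" "set [v] \<inter> insert x V = {}"
        using vV vW unfolding W_def by auto
      note e = ext_path[OF pc(1) pc(3) setP[OF c] q]
      show "is_path n (P c @ [v])" by (rule e(1))
      show "hd (P c @ [v]) = x" using e(2) pc(2) by simp
      show "last (P c @ [v]) = v" by simp
      show "set (tl (P c @ [v])) \<subseteq> insert v V" using e(3) pc(4) by auto
      have pcv: "path_colours n (P c @ [v]) = path_colours n (P c) @ [k]" using e(4) k_def by simp
      have kc: "k \<noteq> c" using kD c unfolding D_def by auto
      show "distinct (path_colours n (P c @ [v]))" using pcv pc(5) pc(6) kD kc unfolding D_def by auto
      show "set (path_colours n (P c @ [v])) = insert k Cb \<union> (if c \<in> S then {c} else {})"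
        using pcv pc(6) by auto
    qed
  qed
qed

end


context ndsetup
begin

lemma gadget_step:
  assumes g: "ginv S Cb V w P" and c0: "c0 \<in> C" "c0 \<notin> S" and cV: "card V \<le> 1000" and cCb: "card Cb \<le> 700"
  shows "\<exists>Cb' V' w' P'. ginv (insert c0 S) Cb' V' w' P' \<and> card Cb' = card Cb + 3 \<and> card V' \<le> card V + 5"
proof -
  define W where "W = V \<union> X \<union> {x, y}"
  define D where "D = Cb \<union> C \<union> C'"
  have VV: "V \<subseteq> nd_vertices n" and CbC: "Cb \<subseteq> nd_colours n" using g unfolding ginv_def by auto
  have finVV: "finite V" using VV finV finite_subset by blast
  have finCb: "finite Cb" using CbC finC finite_subset by blast
  have finW: "finite W" unfolding W_def using finVV finX by simp
  have finD: "finite D" unfolding D_def using finCb finCC finC' by simp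
  have cW: "card W \<le> card V + card X + 2"
  proof -
    have "card W \<le> card V + card X + card {x, y}" unfolding W_def by (rule card_Un3)
    moreover have "card {x, y} \<le> 2" by (simp add: card_insert_if)
    ultimately show ?thesis by linarith
  qed
  have cD: "card D \<le> card Cb + card C + card C'" unfolding D_def by (rule card_Un3)
  have wV: "w \<in> nd_vertices n" using g xV unfolding ginv_def by auto
  have wW: "w \<in> insert x V" using g unfolding ginv_def by auto
  have setP: "\<And>c. c \<in> C \<Longrightarrow> set (P c) \<subseteq> insert x V" using ginv_set[OF g] .
  have c0C: "c0 \<in> nd_colours n" using c0 CC by auto
  define e where "e = int c0 * (int n + 1)"
  have nc0: "\<not> NN n dvd int c0" by (rule not_dvd_colour[OF c0C])
  have d2e: "NN n dvd (int c0 - 2 * e)"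
  proof -
    have "int c0 - 2 * e = NN n * (- int c0)" by (simp add: e_def algebra_simps)
    then show ?thesis by simp
  qed
  have ne: "\<not> NN n dvd e"
  proof
    assume "NN n dvd e"
    then have "NN n dvd 2 * e" by (rule dvd_mult)
    then have "NN n dvd (int c0 - 2 * e) + 2 * e" using d2e by (rule dvd_add[rotated])
    then show False using nc0 by simp
  qed
  define Fh where "Fh = W \<union> (\<lambda>v. vadd n v (- e)) ` W \<union> (\<lambda>v. vadd n v (- int c0)) ` W
     \<union> (\<lambda>d. vadd n w (int d)) ` D \<union> (\<lambda>d. vadd n w (- int d)) ` D"
  have finFh: "finite Fh" unfolding Fh_def using finW finD by simp
  have "card Fh \<le> card W + card W + card W + card D + card D"
    unfolding Fh_def by (intro card_Un_le' card_img_le' finW finD order_refl)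
  then have "card Fh < 2 * n + 1" using cW cD cV cCb cardC cX cC' nbig by linarith
  from avoid[OF finFh this] obtain h where hV: "h \<in> nd_vertices n" and hF: "h \<notin> Fh" by blast
  have hW: "h \<notin> W" using hF unfolding Fh_def by simp
  define h1 where "h1 = vadd n h e"
  define h2 where "h2 = vadd n h (int c0)"
  have h1W: "h1 \<notin> W"
  proof
    assume "h1 \<in> W"
    moreover have "h = vadd n h1 (- e)" using vadd_inv[OF hV] h1_def by simp
    ultimately show False using hF unfolding Fh_def by auto
  qed
  have h2W: "h2 \<notin> W"
  proof
    assume "h2 \<in> W"
    moreover have "h = vadd n h2 (- int c0)" using vadd_inv[OF hV] h2_def by simp
    ultimately show False using hF unfolding Fh_def by auto
  qed
  define cw where "cw = nd_colour n w h"
  have cwD: "cw \<notin> D"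
  proof
    assume "cw \<in> D"
    from col_inv[OF hV cw_def[symmetric]] this hF show False unfolding Fh_def by auto
  qed
  have hw: "h \<noteq> w" using hW wW unfolding W_def by auto
  have cwC: "cw \<in> nd_colours n" unfolding cw_def using nd_colour_in[OF wV hV] hw by simp
  define D' where "D' = insert cw D"
  have finD': "finite D'" unfolding D'_def using finD by simp
  have cD': "card D' \<le> card D + 1" unfolding D'_def using card_insert_le1[OF finD] .
  define Fb where "Fb = set [rr n 0, rr n e, rr n (- e), rr n (- e * (int n + 1))]
     \<union> (\<lambda>v. rr n (int v - int h - e)) ` W \<union> (\<lambda>v. rr n (int h + e - int v)) ` W
     \<union> (\<lambda>d. rr n (int d)) ` D' \<union> (\<lambda>d. rr n (- int d)) ` D'
     \<union> (\<lambda>d. rr n (int d - e)) ` D' \<union> (\<lambda>d. rr n (- int d - e)) ` D'"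
  have finFb: "finite Fb" unfolding Fb_def using finW finD' by simp
  have "card Fb \<le> 4 + card W + card W + card D' + card D' + card D' + card D'"
    unfolding Fb_def
    by (intro card_Un_le' card_img_le' finW finD' order_refl card_le_list[THEN order_trans]) simp
  then have "card Fb < 2 * n + 1" using cW cD cD' cV cCb cardC cX cC' nbig by linarith
  from avoid[OF finFb this] obtain \<beta> where bV: "\<beta> \<in> nd_vertices n" and bF: "\<beta> \<notin> Fb" by blast
  define b where "b = int \<beta>"
  have nb: "\<not> NN n dvd b"
  proof
    assume "NN n dvd b"
    then have "\<beta> = rr n 0" using mod_solve[OF bV, of 0] by (simp add: b_def)
    then show False using bF unfolding Fb_def by simp
  qed
  have nbe: "\<not> NN n dvd (e + b)"
  proof
    assume "NN n dvd (e + b)"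
    then have "\<beta> = rr n (- e)" using mod_solve[OF bV, of "- e"] by (simp add: b_def add.commute)
    then show False using bF unfolding Fb_def by simp
  qed
  have nemb: "\<not> NN n dvd (e - b)"
  proof
    assume "NN n dvd (e - b)"
    then have "NN n dvd (b - e)" by (metis dvd_minus_iff minus_diff_eq)
    then have "\<beta> = rr n e" using mod_solve[OF bV, of e] by (simp add: b_def)
    then show False using bF unfolding Fb_def by simp
  qed
  define g1 where "g1 = vadd n h (e + b)"
  define g2 where "g2 = vadd n h (e - b)"
  have g1W: "g1 \<notin> W"
  proof
    assume a: "g1 \<in> W"
    have "\<beta> = rr n (int g1 - int h - e)" using vadd_solve[OF bV] g1_def b_def by simp
    then show False using a bF unfolding Fb_def by auto
  qed
  have g2W: "g2 \<notin> W"
  proof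
    assume a: "g2 \<in> W"
    have "\<beta> = rr n (int h + e - int g2)" using vadd_solve2[OF bV] g2_def b_def by simp
    then show False using a bF unfolding Fb_def by auto
  qed
  define k1 where "k1 = cl n (int \<beta> + e)"
  define k2 where "k2 = cl n (int \<beta>)"
  have k1D: "k1 \<notin> D'"
  proof
    assume a: "k1 \<in> D'"
    from cl_solve[OF bV k1_def[symmetric]] a bF show False unfolding Fb_def by auto
  qed
  have k2D: "k2 \<notin> D'"
  proof
    assume a: "k2 \<in> D'"
    from cl_solve0[OF bV k2_def[symmetric]] a bF show False unfolding Fb_def by auto
  qed
  have k12: "k1 \<noteq> k2"
  proof
    assume "k1 = k2"
    then have "cl n b = cl n (b + e)" unfolding k1_def k2_def b_def by simp
    from cl_eqD[OF this] show False
    proof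
      assume "b mod NN n = (b + e) mod NN n"
      then have "NN n dvd (b - (b + e))" by (simp add: mod_eq_dvd_iff)
      then show False using ne by simp
    next
      assume "b mod NN n = (- (b + e)) mod NN n"
      then have "NN n dvd (b - (- (b + e)))" by (simp add: mod_eq_dvd_iff)
      then have d: "NN n dvd (2 * b + e)" by (simp add: algebra_simps)
      have "b - (- e * (int n + 1)) = (2 * b + e) * (int n + 1) - NN n * b" by (simp add: algebra_simps)
      moreover have "NN n dvd (2 * b + e) * (int n + 1) - NN n * b" using d by simp
      ultimately have "NN n dvd (int \<beta> - (- e * (int n + 1)))" by (simp add: b_def)
      then have "\<beta> = rr n (- e * (int n + 1))" by (rule mod_solve[OF bV])
      then show False using bF unfolding Fb_def by simp
    qed
  qed
  have k1C: "k1 \<in> nd_colours n" unfolding k1_def using cl_range'[of n "b + e"] nbe by (simp add: b_def add.commute)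
  have k2C: "k2 \<in> nd_colours n" unfolding k2_def using cl_range'[of n b] nb by (simp add: b_def)
  have hh: "vadd n h 0 = h" by (rule vadd_0[OF hV])
  have "vadd n h 0 \<noteq> vadd n h e" by (rule vadd_neq) (simp add: ne)
  then have d1: "h \<noteq> h1" unfolding hh h1_def .
  have "vadd n h 0 \<noteq> vadd n h (e + b)" by (rule vadd_neq) (simp only: diff_0 dvd_minus_iff nbe not_False_eq_True)
  then have d2: "h \<noteq> g1" unfolding hh g1_def .
  have d3: "h1 \<noteq> g1" unfolding h1_def g1_def by (rule vadd_neq) (simp add: nb)
  have "vadd n h 0 \<noteq> vadd n h (int c0)" by (rule vadd_neq) (simp add: nc0)
  then have d4: "h \<noteq> h2" unfolding hh h2_def .
  have "vadd n h 0 \<noteq> vadd n h (e - b)" by (rule vadd_neq) (simp only: diff_0 dvd_minus_iff nemb not_False_eq_True)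
  then have d5: "h \<noteq> g2" unfolding hh g2_def .
  have d6: "h2 \<noteq> g2" unfolding h2_def g2_def
  proof (rule vadd_neq)
    show "\<not> NN n dvd (int c0 - (e - b))"
    proof
      assume "NN n dvd (int c0 - (e - b))"
      then have "NN n dvd (int c0 - (e - b)) - (int c0 - 2 * e)" using d2e by (rule dvd_diff)
      then show False using nbe by (simp add: algebra_simps)
    qed
  qed
  have d7: "h2 \<noteq> h1" unfolding h2_def h1_def
  proof (rule vadd_neq)
    show "\<not> NN n dvd (int c0 - e)"
    proof
      assume "NN n dvd (int c0 - e)"
      then have "NN n dvd (int c0 - e) - (int c0 - 2 * e)" using d2e by (rule dvd_diff)
      then show False using ne by (simp add: algebra_simps)
    qed
  qed
  have d8: "g2 \<noteq> h1" unfolding g2_def h1_def by (rule vadd_neq) (simp add: nb)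
  have col1: "nd_colour n h g1 = k1"
  proof -
    have "nd_colour n (vadd n h 0) (vadd n h (e + b)) = cl n (0 - (e + b))" by (rule nd_colour_vadd)
    then show ?thesis unfolding hh g1_def[symmetric] k1_def using cl_neg[of n "e + b"]
      by (simp add: b_def add.commute)
  qed
  have col2: "nd_colour n g1 h1 = k2"
    unfolding g1_def h1_def nd_colour_vadd k2_def by (simp add: b_def)
  have col3: "nd_colour n h h2 = c0"
  proof -
    have "nd_colour n (vadd n h 0) (vadd n h (int c0)) = cl n (0 - int c0)" by (rule nd_colour_vadd)
    then show ?thesis unfolding hh h2_def[symmetric] using cl_neg[of n "int c0"] cl_id[of c0 n] c0C
      by (simp add: nd_colours_def)
  qed
  have col4: "nd_colour n h2 g2 = k1"
  proof -
    have "nd_colour n h2 g2 = cl n (int c0 - (e - b))" unfolding h2_def g2_def nd_colour_vadd ..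
    also have "\<dots> = cl n (int \<beta> + e)"
    proof (rule cl_mod_eq)
      have "NN n dvd (int c0 - (e - b)) - (int \<beta> + e)" using d2e by (simp add: b_def algebra_simps)
      then show "(int c0 - (e - b)) mod (2 * int n + 1) = (int \<beta> + e) mod (2 * int n + 1)"
        by (simp add: mod_eq_dvd_iff)
    qed
    finally show ?thesis unfolding k1_def .
  qed
  have col5: "nd_colour n g2 h1 = k2"
    unfolding g2_def h1_def nd_colour_vadd k2_def using cl_neg[of n b] by (simp add: b_def)
  define Cb' where "Cb' = insert cw (insert k1 (insert k2 Cb))"
  define V' where "V' = insert h (insert h1 (insert h2 (insert g1 (insert g2 V))))"
  define P' where "P' = (\<lambda>c. if c = c0 then P c @ [h, h2, g2, h1] else P c @ [h, g1, h1])"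
  have cardCb': "card Cb' = card Cb + 3"
  proof -
    have "k2 \<notin> Cb" "k1 \<notin> insert k2 Cb" "cw \<notin> insert k1 (insert k2 Cb)"
      using k1D k2D k12 cwD unfolding D'_def D_def by auto
    then show ?thesis unfolding Cb'_def using finCb by simp
  qed
  have cardV': "card V' \<le> card V + 5"
  proof -
    have "card (insert g2 V) \<le> card V + 1" by (rule card_insert_le1[OF finVV])
    moreover have "card (insert g1 (insert g2 V)) \<le> card (insert g2 V) + 1" by (rule card_insert_le1) (simp add: finVV)
    moreover have "card (insert h2 (insert g1 (insert g2 V))) \<le> card (insert g1 (insert g2 V)) + 1" by (rule card_insert_le1) (simp add: finVV)
    moreover have "card (insert h1 (insert h2 (insert g1 (insert g2 V)))) \<le> card (insert h2 (insert g1 (insert g2 V))) + 1" by (rule card_insert_le1) (simp add: finVV)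
    moreover have "card V' \<le> card (insert h1 (insert h2 (insert g1 (insert g2 V)))) + 1" unfolding V'_def by (rule card_insert_le1) (simp add: finVV)
    ultimately show ?thesis by linarith
  qed
  have newV: "h \<in> nd_vertices n" "h1 \<in> nd_vertices n" "h2 \<in> nd_vertices n" "g1 \<in> nd_vertices n" "g2 \<in> nd_vertices n"
    using hV unfolding h1_def h2_def g1_def g2_def by (simp_all add: vadd_in)
  have i1: "V' \<subseteq> nd_vertices n - X - {x, y}" using g newV hW h1W h2W g1W g2W unfolding ginv_def W_def V'_def by auto
  have i2: "Cb' \<subseteq> nd_colours n - (C \<union> C')" using g cwC k1C k2C cwD k1D k2D unfolding ginv_def D_def D'_def Cb'_def by auto
  have i3: "h1 \<in> insert x V'" unfolding V'_def by simp
  have i4: "\<forall>c\<in>C. is_path n (P' c) \<and> hd (P' c) = x \<and> last (P' c) = h1 \<and> set (tl (P' c)) \<subseteq> V' \<and>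
        distinct (path_colours n (P' c)) \<and> set (path_colours n (P' c)) = Cb' \<union> (if c \<in> insert c0 S then {c} else {})"
  proof
    fix c assume c: "c \<in> C"
    have pc: "is_path n (P c)" "hd (P c) = x" "last (P c) = w" "set (tl (P c)) \<subseteq> V"
      "distinct (path_colours n (P c))" "set (path_colours n (P c)) = Cb \<union> (if c \<in> S then {c} else {})"
      using g c unfolding ginv_def by auto
    show "is_path n (P' c) \<and> hd (P' c) = x \<and> last (P' c) = h1 \<and> set (tl (P' c)) \<subseteq> V' \<and>
        distinct (path_colours n (P' c)) \<and> set (path_colours n (P' c)) = Cb' \<union> (if c \<in> insert c0 S then {c} else {})"
    proof (cases "c = c0")
      case True
      have q: "distinct [h, h2, g2, h1]" "set [h, h2, g2, h1] \<subseteq> nd_vertices n" "set [h, h2, g2, h1] \<inter> insert x V = {}"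
        using newV hW h1W h2W g2W d1 d4 d5 d6 d7 d8 unfolding W_def by auto
      note e = ext_path[OF pc(1) pc(3) setP[OF c] q]
      have P'c: "P' c = P c @ [h, h2, g2, h1]" using True by (simp add: P'_def)
      have pcv: "path_colours n (P' c) = path_colours n (P c) @ [cw, c0, k1, k2]"
        unfolding P'c e(4) using col3 col4 col5 cw_def by simp
      have cS: "set (path_colours n (P c)) = Cb" using pc(6) True c0 by simp
      have c0n: "c0 \<noteq> cw" "c0 \<noteq> k1" "c0 \<noteq> k2" "c0 \<notin> Cb" using cwD k1D k2D c0 g
        unfolding D'_def D_def ginv_def by auto
      have nn: "cw \<noteq> k1" "cw \<noteq> k2" "cw \<notin> Cb" "k1 \<notin> Cb" "k2 \<notin> Cb" using cwD k1D k2D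
        unfolding D'_def D_def by auto
      show ?thesis
      proof (intro conjI)
        show "is_path n (P' c)" using e(1) P'c by simp
        show "hd (P' c) = x" using e(2) pc(2) P'c by simp
        show "last (P' c) = h1" using P'c by simp
        show "set (tl (P' c)) \<subseteq> V'" using e(3) pc(4) P'c unfolding V'_def by auto
        show "distinct (path_colours n (P' c))" unfolding pcv using pc(5) cS c0n nn k12 by auto
        show "set (path_colours n (P' c)) = Cb' \<union> (if c \<in> insert c0 S then {c} else {})"
          unfolding pcv Cb'_def using cS True by auto
      qed
    next
      case False
      have q: "distinct [h, g1, h1]" "set [h, g1, h1] \<subseteq> nd_vertices n" "set [h, g1, h1] \<inter> insert x V = {}"
        using newV hW h1W g1W d1 d2 d3 unfolding W_def by auto
      note e = ext_path[OF pc(1) pc(3) setP[OF c] q]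
      have P'c: "P' c = P c @ [h, g1, h1]" using False by (simp add: P'_def)
      have pcv: "path_colours n (P' c) = path_colours n (P c) @ [cw, k1, k2]"
        unfolding P'c e(4) using col1 col2 cw_def by simp
      have nn: "cw \<noteq> k1" "cw \<noteq> k2" "cw \<notin> Cb" "k1 \<notin> Cb" "k2 \<notin> Cb" "cw \<noteq> c" "k1 \<noteq> c" "k2 \<noteq> c"
        using cwD k1D k2D c unfolding D'_def D_def by auto
      show ?thesis
      proof (intro conjI)
        show "is_path n (P' c)" using e(1) P'c by simp
        show "hd (P' c) = x" using e(2) pc(2) P'c by simp
        show "last (P' c) = h1" using P'c by simp
        show "set (tl (P' c)) \<subseteq> V'" using e(3) pc(4) P'c unfolding V'_def by auto
        show "distinct (path_colours n (P' c))" unfolding pcv using pc(5) pc(6) nn k12 by auto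
        show "set (path_colours n (P' c)) = Cb' \<union> (if c \<in> insert c0 S then {c} else {})"
          unfolding pcv Cb'_def using pc(6) False by auto
      qed
    qed
  qed
  have "ginv (insert c0 S) Cb' V' h1 P'" unfolding ginv_def using i1 i2 i3 i4 by blast
  then show ?thesis using cardCb' cardV' by blast
qed

end


lemma internal_app2: "ps \<noteq> [] \<Longrightarrow> internal_vertices (ps @ [z, y]) = insert z (set (tl ps))"
  unfolding internal_vertices_def by (cases ps) (auto simp: butlast_append)

context ndsetup
begin

lemma final_step:
  assumes g: "ginv C Cb V w P" and cV: "card V \<le> 1000" and cCb: "card Cb \<le> 700"
  shows "\<exists>z k1 k2. z \<in> nd_vertices n - X \<and> z \<notin> V \<and> k1 \<notin> Cb \<and> k2 \<notin> Cb \<and> k1 \<noteq> k2 \<and>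
     k1 \<in> nd_colours n - (C \<union> C') \<and> k2 \<in> nd_colours n - (C \<union> C') \<and>
     (\<forall>c\<in>C. is_path n (P c @ [z, y]) \<and> hd (P c @ [z, y]) = x \<and> last (P c @ [z, y]) = y \<and>
        distinct (path_colours n (P c @ [z, y])) \<and>
        set (path_colours n (P c @ [z, y])) = insert k1 (insert k2 Cb) \<union> {c} \<and>
        internal_vertices (P c @ [z, y]) \<subseteq> insert z V)"
proof -
  define W where "W = V \<union> X \<union> {x, y}"
  define D where "D = Cb \<union> C \<union> C'"
  have VV: "V \<subseteq> nd_vertices n" and CbC: "Cb \<subseteq> nd_colours n" using g unfolding ginv_def by auto
  have finVV: "finite V" using VV finV finite_subset by blast
  have finCb: "finite Cb" using CbC finC finite_subset by blast
  have finW: "finite W" unfolding W_def using finVV finX by simp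
  have finD: "finite D" unfolding D_def using finCb finCC finC' by simp
  have cW: "card W \<le> card V + card X + 2"
  proof -
    have "card W \<le> card V + card X + card {x, y}" unfolding W_def by (rule card_Un3)
    moreover have "card {x, y} \<le> 2" by (simp add: card_insert_if)
    ultimately show ?thesis by linarith
  qed
  have cD: "card D \<le> card Cb + card C + card C'" unfolding D_def by (rule card_Un3)
  have wV: "w \<in> nd_vertices n" using g xV unfolding ginv_def by auto
  have wW: "w \<in> insert x V" using g unfolding ginv_def by auto
  have yw: "y \<noteq> w" using wW g xy unfolding ginv_def by auto
  have setP: "\<And>c. c \<in> C \<Longrightarrow> set (P c) \<subseteq> insert x V" using ginv_set[OF g] .
  define F where "F = W \<union> (\<lambda>d. vadd n w (int d)) ` D \<union> (\<lambda>d. vadd n w (- int d)) ` D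
      \<union> (\<lambda>d. vadd n y (int d)) ` D \<union> (\<lambda>d. vadd n y (- int d)) ` D \<union> set [rr n ((int w + int y) * (int n + 1))]"
  have finF: "finite F" unfolding F_def using finW finD by simp
  have "card F \<le> card W + card D + card D + card D + card D + 1"
    unfolding F_def
    by (intro card_Un_le' card_img_le' finW finD order_refl card_le_list[THEN order_trans]) simp
  then have "card F < 2 * n + 1" using cW cD cV cCb cardC cX cC' nbig by linarith
  from avoid[OF finF this] obtain z where zV: "z \<in> nd_vertices n" and zF: "z \<notin> F" by blast
  have zW: "z \<notin> W" using zF unfolding F_def by simp
  define k1 where "k1 = nd_colour n w z"
  define k2 where "k2 = nd_colour n y z"
  have k1D: "k1 \<notin> D"
  proof
    assume "k1 \<in> D"
    from col_inv[OF zV k1_def[symmetric]] this zF show False unfolding F_def by auto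
  qed
  have k2D: "k2 \<notin> D"
  proof
    assume "k2 \<in> D"
    from col_inv[OF zV k2_def[symmetric]] this zF show False unfolding F_def by auto
  qed
  have zw: "z \<noteq> w" using zW wW unfolding W_def by auto
  have zy: "z \<noteq> y" using zW unfolding W_def by auto
  have k1C: "k1 \<in> nd_colours n" unfolding k1_def using nd_colour_in[OF wV zV] zw by simp
  have k2C: "k2 \<in> nd_colours n" unfolding k2_def using nd_colour_in[OF yV zV] zy by simp
  have k12: "k1 \<noteq> k2"
  proof
    assume "k1 = k2"
    then have "cl n (int z - int w) = cl n (int z - int y)"
      unfolding k1_def k2_def by (metis nd_colour_cl nd_colour_sym)
    from cl_eqD[OF this] show False
    proof
      assume "(int z - int w) mod NN n = (int z - int y) mod NN n"
      then have "NN n dvd ((int z - int w) - (int z - int y))" by (simp add: mod_eq_dvd_iff)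
      then have "NN n dvd (int y - int w)" by simp
      then have "y = rr n (int w)" by (rule mod_solve[OF yV])
      moreover have "w = rr n (int w)" by (rule mod_solve[OF wV]) simp
      ultimately show False using yw by simp
    next
      assume "(int z - int w) mod NN n = (- (int z - int y)) mod NN n"
      then have "NN n dvd ((int z - int w) - (- (int z - int y)))" by (simp add: mod_eq_dvd_iff)
      then have d: "NN n dvd (2 * int z - int w - int y)" by (simp add: algebra_simps)
      have "int z - ((int w + int y) * (int n + 1)) = (2 * int z - int w - int y) * (int n + 1) - NN n * int z"
        by (simp add: algebra_simps)
      moreover have "NN n dvd (2 * int z - int w - int y) * (int n + 1) - NN n * int z" using d by simp
      ultimately have "NN n dvd (int z - ((int w + int y) * (int n + 1)))" by simp
      then have "z = rr n ((int w + int y) * (int n + 1))" by (rule mod_solve[OF zV])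
      then show False using zF unfolding F_def by simp
    qed
  qed
  show ?thesis
  proof (rule exI[of _ z], rule exI[of _ k1], rule exI[of _ k2], intro conjI ballI)
    show "z \<in> nd_vertices n - X" "z \<notin> V" using zV zW unfolding W_def by auto
    show "k1 \<notin> Cb" "k2 \<notin> Cb" "k1 \<noteq> k2" using k1D k2D k12 unfolding D_def by auto
    show "k1 \<in> nd_colours n - (C \<union> C')" "k2 \<in> nd_colours n - (C \<union> C')"
      using k1C k2C k1D k2D unfolding D_def by auto
    fix c assume c: "c \<in> C"
    have pc: "is_path n (P c)" "hd (P c) = x" "last (P c) = w" "set (tl (P c)) \<subseteq> V"
      "distinct (path_colours n (P c))" "set (path_colours n (P c)) = Cb \<union> {c}"
      using g c unfolding ginv_def by auto
    have q: "distinct [z, y]" "set [z, y] \<subseteq> nd_vertices n" "set [z, y] \<inter> insert x V = {}"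
      using zV yV zW zy xy g unfolding W_def ginv_def by auto
    note e = ext_path[OF pc(1) pc(3) setP[OF c] q]
    have pcv: "path_colours n (P c @ [z, y]) = path_colours n (P c) @ [k1, k2]"
      unfolding e(4) k1_def k2_def using nd_colour_sym by simp
    have nn: "k1 \<notin> Cb" "k2 \<notin> Cb" "k1 \<noteq> c" "k2 \<noteq> c" using k1D k2D c unfolding D_def by auto
    have ne: "P c \<noteq> []" using pc(1) by (simp add: is_path_def)
    show "is_path n (P c @ [z, y])" by (rule e(1))
    show "hd (P c @ [z, y]) = x" using e(2) pc(2) by simp
    show "last (P c @ [z, y]) = y" by simp
    show "distinct (path_colours n (P c @ [z, y]))" unfolding pcv using pc(5) pc(6) nn k12 by auto
    show "set (path_colours n (P c @ [z, y])) = insert k1 (insert k2 Cb) \<union> {c}"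
      unfolding pcv using pc(6) by auto
    show "internal_vertices (P c @ [z, y]) \<subseteq> insert z V" unfolding internal_app2[OF ne] using pc(4) by auto
  qed
qed

lemma phase1: "finite S \<Longrightarrow> S \<subseteq> C \<Longrightarrow> \<exists>Cb V w P. ginv S Cb V w P \<and> card Cb = 3 * card S \<and> card V \<le> 5 * card S"
proof (induction S rule: finite_induct)
  case empty
  show ?case using ginv_init by fastforce
next
  case (insert c0 S)
  then obtain Cb V w P where st: "ginv S Cb V w P" "card Cb = 3 * card S" "card V \<le> 5 * card S" by auto
  have "card S \<le> card C" using insert(4) finCC by (intro card_mono) auto
  then have cS: "card S \<le> 100" using cardC by simp
  have "\<exists>Cb' V' w' P'. ginv (insert c0 S) Cb' V' w' P' \<and> card Cb' = card Cb + 3 \<and> card V' \<le> card V + 5"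
    by (rule gadget_step[OF st(1)]) (use insert st cS in auto)
  then obtain Cb' V' w' P' where n: "ginv (insert c0 S) Cb' V' w' P'" "card Cb' = card Cb + 3" "card V' \<le> card V + 5"
    by blast
  have "card (insert c0 S) = card S + 1" using insert(1,2) by simp
  then have "card Cb' = 3 * card (insert c0 S) \<and> card V' \<le> 5 * card (insert c0 S)" using n st by simp
  then show ?case using n(1) by blast
qed

lemma phase2: "k \<le> 392 \<Longrightarrow> \<exists>Cb V w P. ginv C Cb V w P \<and> card Cb = 300 + k \<and> card V \<le> 500 + k"
proof (induction k)
  case 0
  show ?case using phase1[OF finCC order_refl] cardC by auto
next
  case (Suc k)
  then obtain Cb V w P where st: "ginv C Cb V w P" "card Cb = 300 + k" "card V \<le> 500 + k" by auto
  have VV: "V \<subseteq> nd_vertices n" and CbC: "Cb \<subseteq> nd_colours n" using st(1) unfolding ginv_def by auto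
  have finVV: "finite V" using VV finV finite_subset by blast
  have finCb: "finite Cb" using CbC finC finite_subset by blast
  obtain v where v: "ginv C (insert (nd_colour n w v) Cb) (insert v V) v (\<lambda>c. P c @ [v])"
      "nd_colour n w v \<notin> Cb" "v \<notin> V"
    using free_step[OF st(1)] st Suc by auto
  have "card (insert (nd_colour n w v) Cb) = 300 + Suc k" using v(2) finCb st(2) by simp
  moreover have "card (insert v V) \<le> 500 + Suc k" using v(3) finVV st(3) by simp
  ultimately show ?case using v(1) by blast
qed

end

theorem lemma5p3:
  shows "\<exists>N. \<forall>n\<ge>N. \<forall>x y C X C'.
     x \<in> nd_vertices n \<and> y \<in> nd_vertices n \<and> x \<noteq> y \<and>
     C \<subseteq> nd_colours n \<and> card C = 100 \<and>
     X \<subseteq> nd_vertices n \<and> C' \<subseteq> nd_colours n \<and>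
     real (card X) \<le> real n / 10^3 \<and> real (card C') \<le> real n / 10^3 \<longrightarrow>
     (\<exists>Cb Xb. Cb \<subseteq> nd_colours n - (C \<union> C') \<and> card Cb = 694 \<and>
        Xb \<subseteq> nd_vertices n - X \<and> card Xb \<le> 1500 \<and>
        (\<forall>c\<in>C. \<exists>ps. is_path n ps \<and> hd ps = x \<and> last ps = y \<and>
              path_len ps = 695 \<and> rainbow n (Cb \<union> {c}) ps \<and>
              internal_vertices ps \<subseteq> Xb))"
proof (intro exI[of _ 10000] allI impI)
  fix n x y C X C'
  assume nb: "(10000::nat) \<le> n"
  assume h: "x \<in> nd_vertices n \<and> y \<in> nd_vertices n \<and> x \<noteq> y \<and>
     C \<subseteq> nd_colours n \<and> card C = 100 \<and>
     X \<subseteq> nd_vertices n \<and> C' \<subseteq> nd_colours n \<and>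
     real (card X) \<le> real n / 10^3 \<and> real (card C') \<le> real n / 10^3"
  have cX: "1000 * card X \<le> n"
  proof -
    have "real (1000 * card X) \<le> real n" using h by simp
    then show ?thesis by (simp only: of_nat_le_iff)
  qed
  have cC': "1000 * card C' \<le> n"
  proof -
    have "real (1000 * card C') \<le> real n" using h by simp
    then show ?thesis by (simp only: of_nat_le_iff)
  qed
  interpret ndsetup n x y C X C'
    by unfold_locales (use h cX cC' nb in auto)
  obtain Cb V w P where st: "ginv C Cb V w P" "card Cb = 692" "card V \<le> 892"
    using phase2[of 392] by auto
  have VV: "V \<subseteq> nd_vertices n - X - {x, y}" and CbC: "Cb \<subseteq> nd_colours n - (C \<union> C')"
    using st(1) unfolding ginv_def by auto
  have finVV: "finite V" using VV finV finite_subset by blast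
  have finCb: "finite Cb" using CbC finC finite_subset by blast
  obtain z k1 k2 where f: "z \<in> nd_vertices n - X" "z \<notin> V" "k1 \<notin> Cb" "k2 \<notin> Cb" "k1 \<noteq> k2"
     "k1 \<in> nd_colours n - (C \<union> C')" "k2 \<in> nd_colours n - (C \<union> C')"
     "\<forall>c\<in>C. is_path n (P c @ [z, y]) \<and> hd (P c @ [z, y]) = x \<and> last (P c @ [z, y]) = y \<and>
        distinct (path_colours n (P c @ [z, y])) \<and>
        set (path_colours n (P c @ [z, y])) = insert k1 (insert k2 Cb) \<union> {c} \<and>
        internal_vertices (P c @ [z, y]) \<subseteq> insert z V"
    using final_step[OF st(1)] st by auto
  define Cb' where "Cb' = insert k1 (insert k2 Cb)"
  have cCb': "card Cb' = 694" unfolding Cb'_def using f(3-5) finCb st(2) by simp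
  have A1: "Cb' \<subseteq> nd_colours n - (C \<union> C')" unfolding Cb'_def using f(6,7) CbC by auto
  have A3: "insert z V \<subseteq> nd_vertices n - X" using f(1) VV by auto
  have A4: "card (insert z V) \<le> 1500" using finVV st(3) f(2) by simp
  have A5: "\<forall>c\<in>C. \<exists>ps. is_path n ps \<and> hd ps = x \<and> last ps = y \<and> path_len ps = 695 \<and>
        rainbow n (Cb' \<union> {c}) ps \<and> internal_vertices ps \<subseteq> insert z V"
  proof
    fix c assume c: "c \<in> C"
    have pc: "is_path n (P c @ [z, y])" "hd (P c @ [z, y]) = x" "last (P c @ [z, y]) = y"
        "distinct (path_colours n (P c @ [z, y]))"
        "set (path_colours n (P c @ [z, y])) = Cb' \<union> {c}"
        "internal_vertices (P c @ [z, y]) \<subseteq> insert z V"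
      using f(8) c unfolding Cb'_def by auto
    have cn: "c \<notin> Cb'" using c f(6,7) CbC unfolding Cb'_def by auto
    have finCb': "finite Cb'" unfolding Cb'_def using finCb by simp
    have "path_len (P c @ [z, y]) = length (path_colours n (P c @ [z, y]))"
      by (simp add: path_len_def length_path_colours)
    also have "\<dots> = card (Cb' \<union> {c})" using distinct_card[OF pc(4)] pc(5) by simp
    also have "\<dots> = 695" using cn finCb' cCb' by simp
    finally have pl: "path_len (P c @ [z, y]) = 695" .
    show "\<exists>ps. is_path n ps \<and> hd ps = x \<and> last ps = y \<and> path_len ps = 695 \<and>
        rainbow n (Cb' \<union> {c}) ps \<and> internal_vertices ps \<subseteq> insert z V"
      using pc pl unfolding rainbow_def by blast
  qed
  show "\<exists>Cb Xb. Cb \<subseteq> nd_colours n - (C \<union> C') \<and> card Cb = 694 \<and>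
        Xb \<subseteq> nd_vertices n - X \<and> card Xb \<le> 1500 \<and>
        (\<forall>c\<in>C. \<exists>ps. is_path n ps \<and> hd ps = x \<and> last ps = y \<and>
              path_len ps = 695 \<and> rainbow n (Cb \<union> {c}) ps \<and>
              internal_vertices ps \<subseteq> Xb)"
    by (rule exI[of _ Cb'], rule exI[of _ "insert z V"]) (intro conjI A1 cCb' A3 A4 A5)
qed


end
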